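(* Let $0<\varepsilon\le\frac1{12}$ and let $(x,y,z,C)\in\tilde Q(r)$ with $r\ge5$, and let $d(j_1,j_2):=1-y_{j_1,j_2}$. For $j\in J$ define $t^*_j:=\min\{t'\in[T]:\sum_{i\in[m]}\sum_{t=1}^{t'}z_{j,i,t}\ge1-\varepsilon\}$. Let $U\subseteq J$ with $\max_{u,v\in U}d(u,v)\le\varepsilon$, enumerate $U=\{j_1,\dots,j_{|U|}\}$ so that $t^*_{j_1}\le\dots\le t^*_{j_{|U|}}$ (ties broken arbitrarily), and process these jobs consecutively on one machine in this order in slots $1,2,\dots,|U|$, so that $j_k$ has completion time $C^A_{j_k}=k$. Then $C^A_j\le 2t^*_j$ for every $j\in U$.
   Context: Fix a finite set $J$ of unit-length jobs, a partial order $\prec$ on $J$, and $c,S,m\in\mathbb N$; let $T:=Sc$, $[T]=\{1,\dots,T\}$, and for $s\in\{0,\dots,S-1\}$ let $I_s:=\{cs+1,\dots,c(s+1)\}$. Sherali–Adams lift: for a polytope $K=\{x\in\mathbb R^{V}:Ax\ge b\}$ on a finite index set $V$ and $r\ge0$, $SA_r(K)$ is the set of vectors $y$ indexed by subsets of $V$ of size at most $r+1$ with $y_\emptyset=1$ and, for every row $\ell$ and all $I,J'\subseteq V$ with $|I|+|J'|\le r$, $\sum_{H\subseteq J'}(-1)^{|H|}\big(\sum_{v\in V}A_{\ell,v}y_{I\cup H\cup\{v\}}-b_\ell y_{I\cup H}\big)\ge0$. Let $\tilde K$ be the polytope in variables $z_{j,i,t}$ ($j\in J,i\in[m],t\in[T]$)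 and $x_{j,i,s}$ ($j\in J,i\in[m],s\in\{0,\dots,S-1\}$) defined by: $\sum_{i\in[m]}\sum_{t\in[T]}z_{j,i,t}=1$ for all $j$; $\sum_{j\in J}z_{j,i,t}\le1$ for all $i,t$; $\sum_{t'<t}\sum_{i}z_{j_1,i,t'}\ge\sum_{t'\le t}\sum_i z_{j_2,i,t'}$ for all $j_1\prec j_2$ and $t\in[T]$; $\sum_{t\in I_s}z_{j,i,t}=x_{j,i,s}$ for all $j,i,s$; $0\le z_{j,i,t}\le1$. For a vector in $SA_r(\tilde K)$ write $x_{j,i,s}$, $z_{j,i,t}$ for its singleton entries and $x_{(j_1,i_1,s_1),(j_2,i_2,s_2)}$ for the entry indexed by the set of the two $x$-variables. $\tilde Q(r)$ is the set of $(x,y,z,C)$ with $(x,z)\in SA_r(\tilde K)$, $y_{j_1,j_2}=\sum_{s=0}^{S-1}\sum_{i\in[m]}x_{(j_1,i,s),(j_2,i,s)}$ for all $j_1,j_2$, $C_{j_2}\ge C_{j_1}+(1-y_{j_1,j_2})\cdot c$ for all $j_1\prec j_2$, and $C_j=\sum_{i\in[m]}\sum_{t\in[T]}z_{j,i,t}\cdot t$ for all $j$. *)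

theory Defs
  imports Complex_Main
begin

datatype 'a lpvar = Zv 'a nat nat | Xv 'a nat nat

definition Iblk :: "nat \<Rightarrow> nat \<Rightarrow> nat set" where
  "Iblk c s = {c*s+1 .. c*(s+1)}"

text \<open>Finite index set V of the variables (machines [m] = {1..m}, times [T] = {1..T}, T = S c).\<close>
definition Vars :: "'a set \<Rightarrow> nat \<Rightarrow> nat \<Rightarrow> nat \<Rightarrow> 'a lpvar set" where
  "Vars J c S m =
     {Zv j i t | j i t. j \<in> J \<and> i \<in> {1..m} \<and> t \<in> {1..S*c}} \<union>
     {Xv j i s | j i s. j \<in> J \<and> i \<in> {1..m} \<and> s < S}"

text \<open>Rows (a, b) of the system A x \<ge> b describing K~; each equality is encoded
  as two opposite inequalities.\<close>
definition Krows :: "'a set \<Rightarrow> ('a \<Rightarrow> 'a \<Rightarrow> bool) \<Rightarrow> nat \<Rightarrow> nat \<Rightarrow> nat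
                     \<Rightarrow> (('a lpvar \<Rightarrow> real) \<times> real) set" where
  "Krows J prec c S m =
     \<comment> \<open>sum_i sum_t z_{j,i,t} = 1\<close>
     {((\<lambda>v. case v of Zv j' i t \<Rightarrow> if j' = j then 1 else 0 | Xv _ _ _ \<Rightarrow> 0), 1) | j. j \<in> J} \<union>
     {((\<lambda>v. case v of Zv j' i t \<Rightarrow> if j' = j then -1 else 0 | Xv _ _ _ \<Rightarrow> 0), -1) | j. j \<in> J} \<union>
     \<comment> \<open>sum_j z_{j,i,t} \<le> 1\<close>
     {((\<lambda>v. case v of Zv j i' t' \<Rightarrow> if i' = i \<and> t' = t then -1 else 0 | Xv _ _ _ \<Rightarrow> 0), -1)
        | i t. i \<in> {1..m} \<and> t \<in> {1..S*c}} \<union>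
     \<comment> \<open>precedence constraints\<close>
     {((\<lambda>v. case v of Zv j i t' \<Rightarrow>
            (if j = j1 \<and> t' < t then 1 else 0) - (if j = j2 \<and> t' \<le> t then 1 else 0)
          | Xv _ _ _ \<Rightarrow> 0), 0)
        | j1 j2 t. j1 \<in> J \<and> j2 \<in> J \<and> prec j1 j2 \<and> t \<in> {1..S*c}} \<union>
     \<comment> \<open>sum_{t \<in> I_s} z_{j,i,t} = x_{j,i,s}\<close>
     {((\<lambda>v. case v of Zv j' i' t \<Rightarrow> if j' = j \<and> i' = i \<and> t \<in> Iblk c s then 1 else 0
                    | Xv j' i' s' \<Rightarrow> if j' = j \<and> i' = i \<and> s' = s then -1 else 0), 0)
        | j i s. j \<in> J \<and> i \<in> {1..m} \<and> s < S} \<union>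
     {((\<lambda>v. case v of Zv j' i' t \<Rightarrow> if j' = j \<and> i' = i \<and> t \<in> Iblk c s then -1 else 0
                    | Xv j' i' s' \<Rightarrow> if j' = j \<and> i' = i \<and> s' = s then 1 else 0), 0)
        | j i s. j \<in> J \<and> i \<in> {1..m} \<and> s < S} \<union>
     \<comment> \<open>0 \<le> z_{j,i,t} \<le> 1\<close>
     {((\<lambda>v. if v = Zv j i t then 1 else 0), 0)
        | j i t. j \<in> J \<and> i \<in> {1..m} \<and> t \<in> {1..S*c}} \<union>
     {((\<lambda>v. if v = Zv j i t then -1 else 0), -1)
        | j i t. j \<in> J \<and> i \<in> {1..m} \<and> t \<in> {1..S*c}}"

text \<open>Sherali--Adams lift SA_r of the polytope {x \<in> R^V. A x \<ge> b} given by its rows.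
  A lifted vector is a function on subsets of V (only subsets of size \<le> r+1 matter).\<close>
definition SA :: "nat \<Rightarrow> 'v set \<Rightarrow> (('v \<Rightarrow> real) \<times> real) set \<Rightarrow> ('v set \<Rightarrow> real) set" where
  "SA r V rows = {Y. Y {} = 1 \<and>
     (\<forall>(a, b) \<in> rows. \<forall>I J'. I \<subseteq> V \<longrightarrow> J' \<subseteq> V \<longrightarrow> card I + card J' \<le> r \<longrightarrow>
        (\<Sum>H\<in>Pow J'. (-1) ^ card H *
            ((\<Sum>v\<in>V. a v * Y (I \<union> H \<union> {v})) - b * Y (I \<union> H))) \<ge> 0)}"

text \<open>Membership of (x,y,z,C) in Q~(r); x and z are the singleton entries of Y.\<close>
definition in_Qtilde :: "'a set \<Rightarrow> ('a \<Rightarrow> 'a \<Rightarrow> bool) \<Rightarrow> nat \<Rightarrow> nat \<Rightarrow> nat \<Rightarrow> nat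
     \<Rightarrow> ('a lpvar set \<Rightarrow> real) \<Rightarrow> ('a \<Rightarrow> 'a \<Rightarrow> real) \<Rightarrow> ('a \<Rightarrow> real) \<Rightarrow> bool" where
  "in_Qtilde J prec c S m r Y y C \<longleftrightarrow>
     Y \<in> SA r (Vars J c S m) (Krows J prec c S m) \<and>
     (\<forall>j1\<in>J. \<forall>j2\<in>J. y j1 j2 = (\<Sum>s<S. \<Sum>i\<in>{1..m}. Y {Xv j1 i s, Xv j2 i s})) \<and>
     (\<forall>j1\<in>J. \<forall>j2\<in>J. prec j1 j2 \<longrightarrow> C j2 \<ge> C j1 + (1 - y j1 j2) * real c) \<and>
     (\<forall>j\<in>J. C j = (\<Sum>i\<in>{1..m}. \<Sum>t\<in>{1..S*c}. Y {Zv j i t} * real t))"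

definition tstar :: "nat \<Rightarrow> nat \<Rightarrow> nat \<Rightarrow> real \<Rightarrow> ('a lpvar set \<Rightarrow> real) \<Rightarrow> 'a \<Rightarrow> nat" where
  "tstar c S m \<epsilon> Y j = (LEAST t'. t' \<in> {1..S*c} \<and>
      (\<Sum>i\<in>{1..m}. \<Sum>t\<in>{1..t'}. Y {Zv j i t}) \<ge> 1 - \<epsilon>)"

end

theory Submission
  imports Defs
begin


lemma SA_row:
  assumes "Y \<in> SA r V rows" "(a,b) \<in> rows" "I \<subseteq> V" "card I \<le> r"
  shows "b * Y I \<le> (\<Sum>v\<in>V. a v * Y (I \<union> {v}))"
proof -
  from assms(1,2) have h: "\<forall>I J'. I \<subseteq> V \<longrightarrow> J' \<subseteq> V \<longrightarrow> card I + card J' \<le> r \<longrightarrow>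
        (\<Sum>H\<in>Pow J'. (-1) ^ card H *
            ((\<Sum>v\<in>V. a v * Y (I \<union> H \<union> {v})) - b * Y (I \<union> H))) \<ge> 0"
    unfolding SA_def by fastforce
  have "(\<Sum>H\<in>Pow {}. (-1) ^ card H *
            ((\<Sum>v\<in>V. a v * Y (I \<union> H \<union> {v})) - b * Y (I \<union> H))) \<ge> 0"
    using h[rule_format, of I "{}"] assms(3,4) by simp
  thus ?thesis by simp
qed

lemma sum_Vars:
  assumes "finite J"
  shows "(\<Sum>v\<in>Vars J c S m. g v) = (\<Sum>j\<in>J. \<Sum>i\<in>{1..m}. \<Sum>t\<in>{1..S*c}. g (Zv j i t))
     + (\<Sum>j\<in>J. \<Sum>i\<in>{1..m}. \<Sum>s\<in>{..<S}. g (Xv j i s))"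
proof -
  define fZ where "fZ = (\<lambda>(j::'a,i::nat,t::nat). Zv j i t)"
  define fX where "fX = (\<lambda>(j::'a,i::nat,t::nat). Xv j i t)"
  define AZ where "AZ = J \<times> {1..m} \<times> {1..S*c}"
  define AX where "AX = J \<times> {1..m} \<times> {..<S}"
  have e: "Vars J c S m = fZ ` AZ \<union> fX ` AX"
    unfolding Vars_def fZ_def fX_def AZ_def AX_def by (auto simp: image_iff)
  have d: "fZ ` AZ \<inter> fX ` AX = {}" unfolding fZ_def fX_def by auto
  have i1: "inj_on fZ AZ" unfolding fZ_def by (auto simp: inj_on_def)
  have i2: "inj_on fX AX" unfolding fX_def by (auto simp: inj_on_def)
  have fin: "finite AZ" "finite AX" using assms unfolding AZ_def AX_def by auto
  have "(\<Sum>v\<in>Vars J c S m. g v) = sum g (fZ ` AZ) + sum g (fX ` AX)"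
    unfolding e using fin d by (simp add: sum.union_disjoint)
  also have "sum g (fZ ` AZ) = sum (g \<circ> fZ) AZ" by (rule sum.reindex[OF i1])
  also have "sum g (fX ` AX) = sum (g \<circ> fX) AX" by (rule sum.reindex[OF i2])
  also have "sum (g \<circ> fZ) AZ = (\<Sum>j\<in>J. \<Sum>i\<in>{1..m}. \<Sum>t\<in>{1..S*c}. g (Zv j i t))"
    unfolding AZ_def fZ_def by (simp add: sum.cartesian_product split_def)
  also have "sum (g \<circ> fX) AX = (\<Sum>j\<in>J. \<Sum>i\<in>{1..m}. \<Sum>s\<in>{..<S}. g (Xv j i s))"
    unfolding AX_def fX_def by (simp add: sum.cartesian_product split_def)
  finally show ?thesis .
qed

lemma sum_if_pull: "(\<Sum>x\<in>A. (if P then f x else 0)) = (if P then sum f A else (0::real))"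
  by (cases P) auto

lemma if01_mult: "(if P then (1::real) else 0) * x = (if P then x else 0)"
  "(if P then (-1::real) else 0) * x = (if P then -x else 0)" by auto

lemma if_conj0: "(if P \<and> Q then x else (0::real)) = (if P then (if Q then x else 0) else 0)" by auto

lemma if_nest_mult: "(if P then (if Q then a else 0) else (0::real)) * x = (if P then (if Q then a * x else 0) else 0)" by auto

lemmas rowsimps = sum_Vars if01_mult sum_if_pull sum.delta sum.delta' if_conj0 if_nest_mult

lemma finite_Vars: "finite J \<Longrightarrow> finite (Vars J c S m)"
proof -
  assume fin: "finite J"
  have "Vars J c S m = (\<lambda>(j,i,t). Zv j i t) ` (J \<times> {1..m} \<times> {1..S*c})
      \<union> (\<lambda>(j,i,s). Xv j i s) ` (J \<times> {1..m} \<times> {..<S})"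
    unfolding Vars_def by (auto simp: image_iff)
  thus ?thesis using fin by simp
qed

lemma job_row:
  assumes YS: "Y \<in> SA r (Vars J c S m) (Krows J prec c S m)" and fin: "finite J"
    and I: "I \<subseteq> Vars J c S m" "card I \<le> r" and j: "j \<in> J"
  shows "(\<Sum>i\<in>{1..m}. \<Sum>t\<in>{1..S*c}. Y (I \<union> {Zv j i t})) = Y I"
proof -
  let ?a = "\<lambda>v. case v of Zv j' i t \<Rightarrow> if j' = j then 1 else (0::real) | Xv _ _ _ \<Rightarrow> 0"
  let ?a' = "\<lambda>v. case v of Zv j' i t \<Rightarrow> if j' = j then -1 else (0::real) | Xv _ _ _ \<Rightarrow> 0"
  have r1: "(?a, 1) \<in> Krows J prec c S m" using j unfolding Krows_def by blast
  have r2: "(?a', -1) \<in> Krows J prec c S m" using j unfolding Krows_def by blast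
  have s1: "(\<Sum>v\<in>Vars J c S m. ?a v * Y (I\<union>{v})) = (\<Sum>i\<in>{1..m}. \<Sum>t\<in>{1..S*c}. Y (I \<union> {Zv j i t}))"
    using fin j by (simp add: rowsimps)
  have s2: "(\<Sum>v\<in>Vars J c S m. ?a' v * Y (I\<union>{v})) = - (\<Sum>i\<in>{1..m}. \<Sum>t\<in>{1..S*c}. Y (I \<union> {Zv j i t}))"
    using fin j by (simp add: rowsimps sum_negf)
  show ?thesis using SA_row[OF YS r1 I] SA_row[OF YS r2 I] s1 s2 by simp
qed

lemma cap_row:
  assumes YS: "Y \<in> SA r (Vars J c S m) (Krows J prec c S m)" and fin: "finite J"
    and I: "I \<subseteq> Vars J c S m" "card I \<le> r" and it: "i \<in> {1..m}" "t \<in> {1..S*c}"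
  shows "(\<Sum>j\<in>J. Y (I \<union> {Zv j i t})) \<le> Y I"
proof -
  let ?a = "\<lambda>v. case v of Zv j i' t' \<Rightarrow> if i' = i \<and> t' = t then -1 else (0::real) | Xv _ _ _ \<Rightarrow> 0"
  have r1: "(?a, -1) \<in> Krows J prec c S m" using it unfolding Krows_def by blast
  have s1: "(\<Sum>v\<in>Vars J c S m. ?a v * Y (I\<union>{v})) = - (\<Sum>j\<in>J. Y (I \<union> {Zv j i t}))"
    using fin it by (simp add: rowsimps sum_negf)
  show ?thesis using SA_row[OF YS r1 I] s1 by simp
qed

lemma nn_row:
  assumes YS: "Y \<in> SA r (Vars J c S m) (Krows J prec c S m)" and fin: "finite J"
    and I: "I \<subseteq> Vars J c S m" "card I \<le> r" and jit: "j \<in> J" "i \<in> {1..m}" "t \<in> {1..S*c}"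
  shows "0 \<le> Y (I \<union> {Zv j i t})"
proof -
  let ?a = "\<lambda>v. if v = Zv j i t then 1 else (0::real)"
  have r1: "(?a, 0) \<in> Krows J prec c S m" using jit unfolding Krows_def by blast
  have m: "Zv j i t \<in> Vars J c S m" using jit unfolding Vars_def by blast
  have fV: "finite (Vars J c S m)" using fin by (rule finite_Vars)
  have s1: "(\<Sum>v\<in>Vars J c S m. ?a v * Y (I\<union>{v})) = Y (I \<union> {Zv j i t})"
    using fV m by (simp add: if01_mult sum.delta')
  show ?thesis using SA_row[OF YS r1 I] s1 by simp
qed

lemma Iblk_sub: "s < S \<Longrightarrow> Iblk c s \<subseteq> {1..S*c}"
proof -
  assume "s < S"
  then have "c*(s+1) \<le> S*c" by (metis Suc_eq_plus1 Suc_leI mult.commute mult_le_mono2)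
  thus ?thesis unfolding Iblk_def by auto
qed

lemma if_neg0: "(if P then - x else (0::real)) = - (if P then x else 0)" by auto

lemma x_row:
  assumes YS: "Y \<in> SA r (Vars J c S m) (Krows J prec c S m)" and fin: "finite J"
    and I: "I \<subseteq> Vars J c S m" "card I \<le> r" and jis: "j \<in> J" "i \<in> {1..m}" "s < S"
  shows "Y (I \<union> {Xv j i s}) = (\<Sum>t\<in>Iblk c s. Y (I \<union> {Zv j i t}))"
proof -
  let ?a = "\<lambda>v. case v of Zv j' i' t \<Rightarrow> if j' = j \<and> i' = i \<and> t \<in> Iblk c s then 1 else (0::real)
                    | Xv j' i' s' \<Rightarrow> if j' = j \<and> i' = i \<and> s' = s then -1 else 0"
  let ?a' = "\<lambda>v. case v of Zv j' i' t \<Rightarrow> if j' = j \<and> i' = i \<and> t \<in> Iblk c s then -1 else (0::real)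
                    | Xv j' i' s' \<Rightarrow> if j' = j \<and> i' = i \<and> s' = s then 1 else 0"
  have r1: "(?a, 0) \<in> Krows J prec c S m" using jis unfolding Krows_def by blast
  have r2: "(?a', 0) \<in> Krows J prec c S m" using jis unfolding Krows_def by blast
  have e: "(\<Sum>t\<in>{1..S*c}. if t \<in> Iblk c s then Y (I \<union> {Zv j i t}) else 0) = (\<Sum>t\<in>Iblk c s. Y (I \<union> {Zv j i t}))"
    using Iblk_sub[OF jis(3), of c] by (simp add: sum.inter_restrict[symmetric] Int_absorb1)
  have s1: "(\<Sum>v\<in>Vars J c S m. ?a v * Y (I\<union>{v})) = (\<Sum>t\<in>{1..S*c}. if t \<in> Iblk c s then Y (I \<union> {Zv j i t}) else 0) - Y (I \<union> {Xv j i s})"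
    using fin jis by (simp add: rowsimps cong: if_cong)
  have s2: "(\<Sum>v\<in>Vars J c S m. ?a' v * Y (I\<union>{v})) = Y (I \<union> {Xv j i s}) - (\<Sum>t\<in>{1..S*c}. if t \<in> Iblk c s then Y (I \<union> {Zv j i t}) else 0)"
    using fin jis by (simp add: rowsimps if_neg0 sum_negf cong: if_cong)
  show ?thesis using SA_row[OF YS r1 I] SA_row[OF YS r2 I] s1 s2 e by simp
qed

lemma block_sum: "(\<Sum>s<S. \<Sum>t\<in>Iblk c s. f t) = (\<Sum>t\<in>{1..S*c}. (f t :: real))"
proof (induction S)
  case 0 then show ?case by simp
next
  case (Suc S)
  have "{1..Suc S * c} = {1..S*c} \<union> Iblk c S" unfolding Iblk_def by (auto simp: algebra_simps)
  moreover have "{1..S*c} \<inter> Iblk c S = {}" unfolding Iblk_def by (auto simp: algebra_simps)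
  ultimately have "(\<Sum>t\<in>{1..Suc S*c}. f t) = (\<Sum>t\<in>{1..S*c}. f t) + (\<Sum>t\<in>Iblk c S. f t)"
    by (simp add: sum.union_disjoint Iblk_def)
  then show ?case using Suc by simp
qed



lemma Un_single: "{x} \<union> {y} = {x, y}" by auto

theorem mainTheorem16:
  fixes J :: "'a set" and prec :: "'a \<Rightarrow> 'a \<Rightarrow> bool"
    and c S m r :: nat and \<epsilon> :: real
    and Y :: "'a lpvar set \<Rightarrow> real" and y :: "'a \<Rightarrow> 'a \<Rightarrow> real" and C :: "'a \<Rightarrow> real"
    and U :: "'a set" and \<sigma> :: "nat \<Rightarrow> 'a"
  assumes finJ: "finite J"
    and irrefl: "\<forall>j\<in>J. \<not> prec j j"
    and trans: "\<forall>j1\<in>J. \<forall>j2\<in>J. \<forall>j3\<in>J. prec j1 j2 \<longrightarrow> prec j2 j3 \<longrightarrow> prec j1 j3"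
    and eps: "0 < \<epsilon>" "\<epsilon> \<le> 1/12"
    and r: "r \<ge> 5"
    and Q: "in_Qtilde J prec c S m r Y y C"
    and U: "U \<subseteq> J" "\<forall>u\<in>U. \<forall>v\<in>U. 1 - y u v \<le> \<epsilon>"
    and enum: "bij_betw \<sigma> {1..card U} U"
    and sorted: "\<forall>k\<in>{1..card U}. \<forall>k'\<in>{1..card U}. k \<le> k' \<longrightarrow>
                   tstar c S m \<epsilon> Y (\<sigma> k) \<le> tstar c S m \<epsilon> Y (\<sigma> k')"
  shows "\<forall>k\<in>{1..card U}. real k \<le> 2 * real (tstar c S m \<epsilon> Y (\<sigma> k))"
proof
  fix k assume k: "k \<in> {1..card U}"
  have YS: "Y \<in> SA r (Vars J c S m) (Krows J prec c S m)" using Q unfolding in_Qtilde_def by (rule conjunct1)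
  have ydef: "\<And>j1 j2. j1 \<in> J \<Longrightarrow> j2 \<in> J \<Longrightarrow> y j1 j2 = (\<Sum>s<S. \<Sum>i\<in>{1..m}. Y {Xv j1 i s, Xv j2 i s})"
    using Q unfolding in_Qtilde_def by auto
  have Y0: "Y {} = 1" using YS unfolding SA_def mem_Collect_eq by (rule conjunct1)
  have I0: "{} \<subseteq> Vars J c S m" "card {} \<le> r" by auto
  have I1: "{w} \<subseteq> Vars J c S m" "card {w} \<le> r" if "w \<in> Vars J c S m" for w using that r by auto
  have ZV: "Zv j i t \<in> Vars J c S m" if "j \<in> J" "i \<in> {1..m}" "t \<in> {1..S*c}" for j i t
    using that unfolding Vars_def by blast
  have XV: "Xv j i s \<in> Vars J c S m" if "j \<in> J" "i \<in> {1..m}" "s < S" for j i s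
    using that unfolding Vars_def by blast
  have J0: "(\<Sum>i\<in>{1..m}. \<Sum>t\<in>{1..S*c}. Y {Zv j i t}) = 1" if "j \<in> J" for j
    using job_row[OF YS finJ I0 that] Y0 by simp
  have N0: "0 \<le> Y {Zv j i t}" if "j \<in> J" "i \<in> {1..m}" "t \<in> {1..S*c}" for j i t
    using nn_row[OF YS finJ I0 that] by simp
  have X0: "Y {Xv j i s} = (\<Sum>t\<in>Iblk c s. Y {Zv j i t})" if "j \<in> J" "i \<in> {1..m}" "s < S" for j i s
    using x_row[OF YS finJ I0 that] by simp
  have finU: "finite U" using finite_subset[OF U(1) finJ] .
  define a where "a = \<sigma> k"
  define t where "t = tstar c S m \<epsilon> Y a"
  define B where "B = \<sigma> ` {1..k}"
  have aU: "a \<in> U" unfolding a_def by (rule bij_betw_apply[OF enum k])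
  have aJ: "a \<in> J" using aU U(1) by (rule subsetD[rotated])
  have BU: "B \<subseteq> U"
  proof -
    have "{1..k} \<subseteq> {1..card U}" using k by auto
    then have "\<sigma> ` {1..k} \<subseteq> \<sigma> ` {1..card U}" by (rule image_mono)
    thus ?thesis unfolding B_def bij_betw_imp_surj_on[OF enum] .
  qed
  have BJ: "B \<subseteq> J" using BU U(1) by (rule order_trans)
  have finB: "finite B" unfolding B_def by simp
  have cardB: "card B = k"
  proof -
    have "inj_on \<sigma> {1..k}" using bij_betw_imp_inj_on[OF enum] k by (auto intro: inj_on_subset)
    thus ?thesis unfolding B_def by (simp add: card_image)
  qed
  have tB: "tstar c S m \<epsilon> Y b \<le> t" if bB: "b \<in> B" for b
  proof -
    obtain l where l: "l \<in> {1..k}" "b = \<sigma> l" using bB unfolding B_def by blast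
    show ?thesis unfolding t_def a_def l(2) using sorted l(1) k by auto
  qed
  have Tpos: "1 \<le> S*c"
  proof (rule ccontr)
    assume "\<not> 1 \<le> S*c" then have "S*c = 0" by linarith
    then show False using J0[OF aJ] by simp
  qed
  have tstarP: "tstar c S m \<epsilon> Y b \<le> S*c \<and> 1 - \<epsilon> \<le> (\<Sum>i\<in>{1..m}. \<Sum>\<tau>\<in>{1..tstar c S m \<epsilon> Y b}. Y {Zv b i \<tau>})"
    if "b \<in> J" for b
  proof -
    let ?P = "\<lambda>t'. t' \<in> {1..S*c} \<and> (\<Sum>i\<in>{1..m}. \<Sum>t\<in>{1..t'}. Y {Zv b i t}) \<ge> 1 - \<epsilon>"
    have "?P (S*c)" using Tpos J0[OF that] eps by simp
    then have "?P (LEAST t'. ?P t')" by (rule LeastI)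
    thus ?thesis unfolding tstar_def by simp
  qed

  have Q1: "Y {Xv a i s, Zv b i \<tau>} \<le> Y {Zv b i \<tau>}"
    if b: "b \<in> J" "i \<in> {1..m}" "s < S" "\<tau> \<in> Iblk c s" for b i s \<tau>
  proof -
    have \<tau>T: "\<tau> \<in> {1..S*c}" using Iblk_sub[OF b(3)] b(4) by blast
    have w: "Zv b i \<tau> \<in> Vars J c S m" by (rule ZV[OF b(1,2) \<tau>T])
    note I = I1[OF w]
    have nn: "0 \<le> Y ({Zv b i \<tau>} \<union> {Zv a i' \<tau>'})" if "i' \<in> {1..m}" "\<tau>' \<in> {1..S*c}" for i' \<tau>'
      by (rule nn_row[OF YS finJ I aJ that])
    have "Y {Xv a i s, Zv b i \<tau>} = Y ({Zv b i \<tau>} \<union> {Xv a i s})" by (simp add: insert_commute)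
    also have "\<dots> = (\<Sum>\<tau>'\<in>Iblk c s. Y ({Zv b i \<tau>} \<union> {Zv a i \<tau>'}))"
      by (rule x_row[OF YS finJ I aJ b(2,3)])
    also have "\<dots> \<le> (\<Sum>\<tau>'\<in>{1..S*c}. Y ({Zv b i \<tau>} \<union> {Zv a i \<tau>'}))"
      by (rule sum_mono2) (use Iblk_sub[OF b(3)] nn b(2) in auto)
    also have "\<dots> \<le> (\<Sum>i'\<in>{1..m}. \<Sum>\<tau>'\<in>{1..S*c}. Y ({Zv b i \<tau>} \<union> {Zv a i' \<tau>'}))"
      by (rule member_le_sum) (use b(2) nn in \<open>auto intro: sum_nonneg\<close>)
    also have "\<dots> = Y {Zv b i \<tau>}" by (rule job_row[OF YS finJ I aJ])
    finally show ?thesis .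
  qed
  have ysplit: "y a b = (\<Sum>s<S. \<Sum>i\<in>{1..m}. \<Sum>\<tau>\<in>Iblk c s. Y {Xv a i s, Zv b i \<tau>})" if b: "b \<in> J" for b
  proof -
    have "Y {Xv a i s, Xv b i s} = (\<Sum>\<tau>\<in>Iblk c s. Y {Xv a i s, Zv b i \<tau>})"
      if "i \<in> {1..m}" "s < S" for i s
      using x_row[OF YS finJ I1[OF XV[OF aJ that]] b that, unfolded Un_single] .
    thus ?thesis unfolding ydef[OF aJ b] by simp
  qed
  define P1 where "P1 b = (\<Sum>s<S. \<Sum>i\<in>{1..m}. \<Sum>\<tau>\<in>Iblk c s. if \<tau> \<le> t then Y {Xv a i s, Zv b i \<tau>} else 0)" for b
  have tail: "(\<Sum>i\<in>{1..m}. \<Sum>\<tau>\<in>{1..S*c}. if t < \<tau> then Y {Zv b i \<tau>} else 0) \<le> \<epsilon>"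
    if b: "b \<in> J" "tstar c S m \<epsilon> Y b \<le> t" for b
  proof -
    let ?tb = "tstar c S m \<epsilon> Y b"
    have tb: "?tb \<le> S*c" "1 - \<epsilon> \<le> (\<Sum>i\<in>{1..m}. \<Sum>\<tau>\<in>{1..?tb}. Y {Zv b i \<tau>})" using tstarP[OF b(1)] by auto
    have "(\<Sum>i\<in>{1..m}. \<Sum>\<tau>\<in>{1..S*c}. if t < \<tau> then Y {Zv b i \<tau>} else 0)
        = (\<Sum>i\<in>{1..m}. \<Sum>\<tau>\<in>{1..S*c}. Y {Zv b i \<tau>} - (if \<tau> \<le> t then Y {Zv b i \<tau>} else 0))"
      by (rule sum.cong[OF refl], rule sum.cong[OF refl]) auto
    also have "\<dots> = (\<Sum>i\<in>{1..m}. \<Sum>\<tau>\<in>{1..S*c}. Y {Zv b i \<tau>}) - (\<Sum>i\<in>{1..m}. \<Sum>\<tau>\<in>{1..S*c}. if \<tau> \<le> t then Y {Zv b i \<tau>} else 0)"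
      by (simp add: sum_subtractf)
    also have "\<dots> = 1 - (\<Sum>i\<in>{1..m}. \<Sum>\<tau>\<in>{1..S*c}. if \<tau> \<le> t then Y {Zv b i \<tau>} else 0)"
      using J0[OF b(1)] by simp
    also have "\<dots> \<le> 1 - (\<Sum>i\<in>{1..m}. \<Sum>\<tau>\<in>{1..?tb}. Y {Zv b i \<tau>})"
    proof -
      have "(\<Sum>\<tau>\<in>{1..?tb}. Y {Zv b i \<tau>}) \<le> (\<Sum>\<tau>\<in>{1..S*c}. if \<tau> \<le> t then Y {Zv b i \<tau>} else 0)"
        if i: "i \<in> {1..m}" for i
      proof -
        have "(\<Sum>\<tau>\<in>{1..?tb}. Y {Zv b i \<tau>}) = (\<Sum>\<tau>\<in>{1..?tb}. if \<tau> \<le> t then Y {Zv b i \<tau>} else 0)"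
          using b(2) by (intro sum.cong) auto
        also have "\<dots> \<le> (\<Sum>\<tau>\<in>{1..S*c}. if \<tau> \<le> t then Y {Zv b i \<tau>} else 0)"
          by (rule sum_mono2) (use tb(1) N0[OF b(1) i] in auto)
        finally show ?thesis .
      qed
      then have "(\<Sum>i\<in>{1..m}. \<Sum>\<tau>\<in>{1..?tb}. Y {Zv b i \<tau>}) \<le> (\<Sum>i\<in>{1..m}. \<Sum>\<tau>\<in>{1..S*c}. if \<tau> \<le> t then Y {Zv b i \<tau>} else 0)"
        by (rule sum_mono)
      thus ?thesis by linarith
    qed
    also have "\<dots> \<le> \<epsilon>" using tb(2) by linarith
    finally show ?thesis .
  qed
  have ybound: "y a b \<le> \<epsilon> + P1 b" if bB: "b \<in> B" for b
  proof -
    have b: "b \<in> J" using bB BJ by blast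
    have "y a b \<le> (\<Sum>s<S. \<Sum>i\<in>{1..m}. \<Sum>\<tau>\<in>Iblk c s. (if \<tau> \<le> t then Y {Xv a i s, Zv b i \<tau>} else 0) + (if t < \<tau> then Y {Zv b i \<tau>} else 0))"
      unfolding ysplit[OF b]
      by (intro sum_mono) (use Q1[OF b] in auto)
    also have "\<dots> = P1 b + (\<Sum>s<S. \<Sum>i\<in>{1..m}. \<Sum>\<tau>\<in>Iblk c s. if t < \<tau> then Y {Zv b i \<tau>} else 0)"
      unfolding P1_def by (simp add: sum.distrib)
    also have "(\<Sum>s<S. \<Sum>i\<in>{1..m}. \<Sum>\<tau>\<in>Iblk c s. if t < \<tau> then Y {Zv b i \<tau>} else 0)
        = (\<Sum>i\<in>{1..m}. \<Sum>\<tau>\<in>{1..S*c}. if t < \<tau> then Y {Zv b i \<tau>} else 0)"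
      by (subst sum.swap) (simp add: block_sum)
    also have "\<dots> \<le> \<epsilon>" by (rule tail[OF b tB[OF bB]])
    finally show ?thesis by simp
  qed
  have Xnn: "0 \<le> Y {Xv a i s}" if "i \<in> {1..m}" "s < S" for i s
    unfolding X0[OF aJ that] using Iblk_sub[OF that(2), of c] N0[OF aJ that(1)] by (intro sum_nonneg) blast
  have Xsum: "(\<Sum>s<S. \<Sum>i\<in>{1..m}. Y {Xv a i s}) = 1"
  proof -
    have "(\<Sum>s<S. \<Sum>i\<in>{1..m}. Y {Xv a i s}) = (\<Sum>s<S. \<Sum>i\<in>{1..m}. \<Sum>\<tau>\<in>Iblk c s. Y {Zv a i \<tau>})"
      using X0[OF aJ] by simp
    also have "\<dots> = (\<Sum>i\<in>{1..m}. \<Sum>\<tau>\<in>{1..S*c}. Y {Zv a i \<tau>})"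
      by (subst sum.swap) (simp add: block_sum)
    also have "\<dots> = 1" by (rule J0[OF aJ])
    finally show ?thesis .
  qed
  have P1sum: "(\<Sum>b\<in>B. P1 b) \<le> real t"
  proof -
    have "(\<Sum>b\<in>B. P1 b) = (\<Sum>s<S. \<Sum>i\<in>{1..m}. \<Sum>\<tau>\<in>Iblk c s. if \<tau> \<le> t then (\<Sum>b\<in>B. Y {Xv a i s, Zv b i \<tau>}) else 0)"
      unfolding P1_def by (simp only: sum.swap[where A=B] sum_if_pull)
    also have "\<dots> \<le> (\<Sum>s<S. \<Sum>i\<in>{1..m}. \<Sum>\<tau>\<in>Iblk c s. if \<tau> \<le> t then Y {Xv a i s} else 0)"
    proof (intro sum_mono)
      fix s i \<tau> assume s: "s \<in> {..<S}" and i: "i \<in> {1..m}" and \<tau>: "\<tau> \<in> Iblk c s"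
      have sS: "s < S" using s by simp
      have \<tau>T: "\<tau> \<in> {1..S*c}" using Iblk_sub[OF sS] \<tau> by blast
      note I = I1[OF XV[OF aJ i sS]]
      have "(\<Sum>b\<in>B. Y {Xv a i s, Zv b i \<tau>}) \<le> (\<Sum>b\<in>J. Y {Xv a i s, Zv b i \<tau>})"
        by (rule sum_mono2[OF finJ BJ]) (use nn_row[OF YS finJ I _ i \<tau>T, unfolded Un_single] in simp)
      also have "\<dots> \<le> Y {Xv a i s}" using cap_row[OF YS finJ I i \<tau>T, unfolded Un_single] .
      finally show "(if \<tau> \<le> t then (\<Sum>b\<in>B. Y {Xv a i s, Zv b i \<tau>}) else 0) \<le> (if \<tau> \<le> t then Y {Xv a i s} else 0)"
        by simp
    qed
    also have "\<dots> \<le> (\<Sum>s<S. \<Sum>i\<in>{1..m}. real t * Y {Xv a i s})"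
    proof (intro sum_mono)
      fix s i assume s: "s \<in> {..<S}" and i: "i \<in> {1..m}"
      have sS: "s < S" using s by simp
      have X: "0 \<le> Y {Xv a i s}" by (rule Xnn[OF i sS])
      have "(\<Sum>\<tau>\<in>Iblk c s. if \<tau> \<le> t then Y {Xv a i s} else 0) = (\<Sum>\<tau>\<in>Iblk c s \<inter> {..t}. Y {Xv a i s})"
      proof -
        have fI: "finite (Iblk c s)" unfolding Iblk_def by simp
        show ?thesis by (simp only: sum.inter_restrict[OF fI] atMost_iff)
      qed
      also have "\<dots> \<le> (\<Sum>\<tau>\<in>{1..t}. Y {Xv a i s})"
        by (rule sum_mono2) (auto simp: Iblk_def X)
      also have "\<dots> = real t * Y {Xv a i s}" by simp
      finally show "(\<Sum>\<tau>\<in>Iblk c s. if \<tau> \<le> t then Y {Xv a i s} else 0) \<le> real t * Y {Xv a i s}" .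
    qed
    also have "\<dots> = real t * (\<Sum>s<S. \<Sum>i\<in>{1..m}. Y {Xv a i s})" by (simp add: sum_distrib_left)
    also have "\<dots> = real t" using Xsum by simp
    finally show ?thesis .
  qed
  have low: "real k * (1 - \<epsilon>) \<le> (\<Sum>b\<in>B. y a b)"
  proof -
    have "(\<Sum>b\<in>B. (1 - \<epsilon>)) \<le> (\<Sum>b\<in>B. y a b)"
      by (rule sum_mono) (use U(2) aU BU in force)
    thus ?thesis using cardB by simp
  qed
  have up: "(\<Sum>b\<in>B. y a b) \<le> real k * \<epsilon> + real t"
  proof -
    have "(\<Sum>b\<in>B. y a b) \<le> (\<Sum>b\<in>B. \<epsilon> + P1 b)" by (rule sum_mono) (rule ybound)
    also have "\<dots> = real k * \<epsilon> + (\<Sum>b\<in>B. P1 b)" using cardB by (simp add: sum.distrib)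
    finally show ?thesis using P1sum by linarith
  qed
  have "real k * \<epsilon> \<le> real k * (1/12)" using eps(2) by (intro mult_left_mono) auto
  then have "real k \<le> 2 * real t" using low up by (simp add: algebra_simps)
  thus "real k \<le> 2 * real (tstar c S m \<epsilon> Y (\<sigma> k))" unfolding t_def a_def .
qed
end
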